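(* Let $H$ be a non-transitive tournament with $6$ vertices. If $H$ contains twins or has a non-trivial automorphism, then $H$ is not quasirandom-forcing.
   Context: A tournament is an orientation of a complete graph; $\mathrm{Aut}(H)$ is its automorphism group. Two vertices $u,v$ of a tournament are twins if every out-neighbor of $u$, possibly except $v$, is an out-neighbor of $v$, and every out-neighbor of $v$, possibly except $u$, is an out-neighbor of $u$. For tournaments $H,G$, $d(H,G)$ is the probability that $\lvert H\rvert$ uniformly random distinct vertices of $G$ induce a tournament isomorphic to $H$ (and $0$ if $\lvert H\rvert>\lvert G\rvert$). A sequence $(G_n)$ of tournaments with $\lvert G_n\rvert\to\infty$ is quasirandom if $\lim_{n\to\infty} d(F,G_n)=\frac{m!}{\lvert\mathrm{Aut}(F)\rvert}2^{-\binom{m}{2}}$ for every tournament $F$ with $m$ vertices. A $k$-vertex tournament $H$ is quasirandom-forcing if every sequence $(G_n)$ of tournaments with $\lvert G_n\rvert\to\infty$ and $\lim_{n\to\infty} d(H,G_n)=\frac{k!}{\lvert\mathrm{Aut}(H)\rvert}2^{-\binom{k}{2}}$ is quasirandom. *)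

theory Defs
  imports Complex_Main "HOL-Combinatorics.Permutations"
begin

text \<open>A tournament on the vertex set {0..<n} is given by its size n and an arc relation E
  (E i j means i \<rightarrow> j); only the values of E on {0..<n} matter.\<close>

definition tournament :: "nat \<Rightarrow> (nat \<Rightarrow> nat \<Rightarrow> bool) \<Rightarrow> bool" where
  "tournament n E \<longleftrightarrow>
     (\<forall>i<n. \<not> E i i) \<and> (\<forall>i<n. \<forall>j<n. i \<noteq> j \<longrightarrow> (E i j \<longleftrightarrow> \<not> E j i))"

definition transitive_tournament :: "nat \<Rightarrow> (nat \<Rightarrow> nat \<Rightarrow> bool) \<Rightarrow> bool" where
  "transitive_tournament n E \<longleftrightarrow>
     (\<forall>i<n. \<forall>j<n. \<forall>l<n. E i j \<and> E j l \<longrightarrow> E i l)"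

definition automorphisms :: "nat \<Rightarrow> (nat \<Rightarrow> nat \<Rightarrow> bool) \<Rightarrow> (nat \<Rightarrow> nat) set" where
  "automorphisms n E =
     {p. p permutes {0..<n} \<and> (\<forall>i<n. \<forall>j<n. E i j \<longleftrightarrow> E (p i) (p j))}"

definition has_nontrivial_automorphism :: "nat \<Rightarrow> (nat \<Rightarrow> nat \<Rightarrow> bool) \<Rightarrow> bool" where
  "has_nontrivial_automorphism n E \<longleftrightarrow> (\<exists>p\<in>automorphisms n E. p \<noteq> id)"

definition twins :: "nat \<Rightarrow> (nat \<Rightarrow> nat \<Rightarrow> bool) \<Rightarrow> nat \<Rightarrow> nat \<Rightarrow> bool" where
  "twins n E u v \<longleftrightarrow> u < n \<and> v < n \<and> u \<noteq> v \<and>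
     (\<forall>w<n. w \<noteq> v \<and> E u w \<longrightarrow> E v w) \<and>
     (\<forall>w<n. w \<noteq> u \<and> E v w \<longrightarrow> E u w)"

definition has_twins :: "nat \<Rightarrow> (nat \<Rightarrow> nat \<Rightarrow> bool) \<Rightarrow> bool" where
  "has_twins n E \<longleftrightarrow> (\<exists>u v. twins n E u v)"

definition induces_copy ::
  "nat \<Rightarrow> (nat \<Rightarrow> nat \<Rightarrow> bool) \<Rightarrow> (nat \<Rightarrow> nat \<Rightarrow> bool) \<Rightarrow> nat set \<Rightarrow> bool" where
  "induces_copy k H G S \<longleftrightarrow>
     (\<exists>f. bij_betw f {0..<k} S \<and> (\<forall>i<k. \<forall>j<k. H i j \<longleftrightarrow> G (f i) (f j)))"

text \<open>d(H,G): probability that k = |H| uniformly random distinct vertices of G induce a copy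
  of H; equals (number of k-subsets inducing H) / (n choose k), and is 0 when k > n.\<close>
definition density ::
  "nat \<Rightarrow> (nat \<Rightarrow> nat \<Rightarrow> bool) \<Rightarrow> nat \<Rightarrow> (nat \<Rightarrow> nat \<Rightarrow> bool) \<Rightarrow> real" where
  "density k H n G =
     (if k > n then 0 else
      real (card {S. S \<subseteq> {0..<n} \<and> card S = k \<and> induces_copy k H G S}) / real (n choose k))"

definition random_density :: "nat \<Rightarrow> (nat \<Rightarrow> nat \<Rightarrow> bool) \<Rightarrow> real" where
  "random_density m F = fact m / real (card (automorphisms m F)) * (1/2) ^ (m choose 2)"

definition quasirandom :: "(nat \<Rightarrow> nat \<times> (nat \<Rightarrow> nat \<Rightarrow> bool)) \<Rightarrow> bool" where
  "quasirandom Gs \<longleftrightarrow>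
     (\<forall>i. tournament (fst (Gs i)) (snd (Gs i))) \<and>
     filterlim (\<lambda>i. fst (Gs i)) at_top sequentially \<and>
     (\<forall>m F. tournament m F \<longrightarrow>
        (\<lambda>i. density m F (fst (Gs i)) (snd (Gs i))) \<longlonglongrightarrow> random_density m F)"

definition quasirandom_forcing :: "nat \<Rightarrow> (nat \<Rightarrow> nat \<Rightarrow> bool) \<Rightarrow> bool" where
  "quasirandom_forcing k H \<longleftrightarrow>
     (\<forall>Gs. (\<forall>i. tournament (fst (Gs i)) (snd (Gs i))) \<and>
           filterlim (\<lambda>i. fst (Gs i)) at_top sequentially \<and>
           (\<lambda>i. density k H (fst (Gs i)) (snd (Gs i))) \<longlonglongrightarrow> random_density k H
           \<longrightarrow> quasirandom Gs)"

end

theory Submission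
  imports Defs
begin


definition copies :: "nat \<Rightarrow> (nat \<Rightarrow> nat \<Rightarrow> bool) \<Rightarrow> nat \<Rightarrow> (nat \<Rightarrow> nat \<Rightarrow> bool) \<Rightarrow> nat set set" where
  "copies k H n G = {S. S \<subseteq> {0..<n} \<and> card S = k \<and> induces_copy k H G S}"

lemma density_copies: "k \<le> n \<Longrightarrow> density k H n G = real (card (copies k H n G)) / real (n choose k)"
  by (simp add: density_def copies_def)

lemma finite_copies: "finite (copies k H n G)"
  unfolding copies_def by (rule finite_subset[of _ "Pow {0..<n}"]) auto

lemma induces_copy_cong:
  assumes "\<And>x y. x \<in> S \<Longrightarrow> y \<in> S \<Longrightarrow> G x y = G' x y"
  shows "induces_copy k H G S = induces_copy k H G' S"
proof -
  have "(\<forall>i<k. \<forall>j<k. H i j = G (f i) (f j)) = (\<forall>i<k. \<forall>j<k. H i j = G' (f i) (f j))"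
    if "bij_betw f {0..<k} S" for f
  proof -
    have "\<forall>i<k. f i \<in> S" using bij_betwE[OF that] by auto
    thus ?thesis using assms by auto
  qed
  thus ?thesis unfolding induces_copy_def by blast
qed

lemma card_Z:
  assumes "t < n"
  shows "card {S. S \<subseteq> {0..<n} \<and> card S = 6 \<and> t \<in> S} \<le> (n - 1) choose 5"
proof -
  let ?Z = "{S. S \<subseteq> {0..<n} \<and> card S = 6 \<and> t \<in> S}"
  let ?W = "{S'. S' \<subseteq> {0..<n} - {t} \<and> card S' = 5}"
  have "?Z \<subseteq> insert t ` ?W"
  proof
    fix S assume S: "S \<in> ?Z"
    hence fin: "finite S" by (auto intro: finite_subset)
    have "S = insert t (S - {t})" using S by auto
    moreover have "S - {t} \<in> ?W" using S fin by auto
    ultimately show "S \<in> insert t ` ?W" by blast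
  qed
  hence "card ?Z \<le> card (insert t ` ?W)" by (intro card_mono) auto
  also have "\<dots> \<le> card ?W" by (rule card_image_le) auto
  also have "\<dots> = card ({0..<n} - {t}) choose 5" by (rule n_subsets) auto
  also have "\<dots> = (n - 1) choose 5" using assms by simp
  finally show ?thesis .
qed

lemma card_copies_diff:
  assumes "t < n" and "\<And>x y. x \<noteq> t \<Longrightarrow> y \<noteq> t \<Longrightarrow> G x y = G' x y"
  shows "\<bar>real (card (copies 6 H n G)) - real (card (copies 6 H n G'))\<bar> \<le> real ((n - 1) choose 5)"
proof -
  let ?Z = "{S. S \<subseteq> {0..<n} \<and> card S = 6 \<and> t \<in> S}"
  have finZ: "finite ?Z" by (rule finite_subset[of _ "Pow {0..<n}"]) auto
  have sub: "copies 6 H n G1 \<subseteq> copies 6 H n G2 \<union> ?Z"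
    if "\<And>x y. x \<noteq> t \<Longrightarrow> y \<noteq> t \<Longrightarrow> G1 x y = G2 x y" for G1 G2
  proof
    fix S assume S: "S \<in> copies 6 H n G1"
    show "S \<in> copies 6 H n G2 \<union> ?Z"
    proof (cases "t \<in> S")
      case True thus ?thesis using S by (auto simp: copies_def)
    next
      case False
      have "induces_copy 6 H G1 S = induces_copy 6 H G2 S"
        by (rule induces_copy_cong) (metis False that)
      thus ?thesis using S by (auto simp: copies_def)
    qed
  qed
  have le: "card (copies 6 H n G1) \<le> card (copies 6 H n G2) + card ?Z"
    if "\<And>x y. x \<noteq> t \<Longrightarrow> y \<noteq> t \<Longrightarrow> G1 x y = G2 x y" for G1 G2
  proof -
    have "card (copies 6 H n G1) \<le> card (copies 6 H n G2 \<union> ?Z)"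
      by (rule card_mono) (use finZ finite_copies sub[OF that] in auto)
    also have "\<dots> \<le> card (copies 6 H n G2) + card ?Z" by (rule card_Un_le)
    finally show ?thesis .
  qed
  have 1: "card (copies 6 H n G) \<le> card (copies 6 H n G') + card ?Z" by (rule le) (use assms in auto)
  have 2: "card (copies 6 H n G') \<le> card (copies 6 H n G) + card ?Z" by (rule le) (use assms in auto)
  have 3: "card ?Z \<le> (n - 1) choose 5" by (rule card_Z[OF assms(1)])
  show ?thesis using 1 2 3 by linarith
qed

lemma choose_ratio: "n \<ge> 6 \<Longrightarrow> real ((n - 1) choose 5) / real (n choose 6) = 6 / real n"
proof -
  assume n6: "n \<ge> 6"
  then obtain m where n: "n = Suc m" by (cases n) auto
  have "Suc m * (m choose 5) = (Suc m choose 6) * 6"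
    using Suc_times_binomial_eq[of m 5] by (simp add: numeral_eq_Suc)
  hence eq: "real (Suc m) * real (m choose 5) = real (Suc m choose 6) * 6" by (metis of_nat_mult of_nat_numeral)
  have "Suc m choose 6 > 0" using n n6 by (intro zero_less_binomial) simp
  thus ?thesis using eq n by (simp add: field_simps)
qed

lemma discrete_ivt:
  fixes d :: "nat \<Rightarrow> real"
  assumes "d 0 < p" "p \<le> d N" "\<And>t. t < N \<Longrightarrow> \<bar>d (Suc t) - d t\<bar> \<le> \<delta>"
  shows "\<exists>t\<le>N. \<bar>d t - p\<bar> \<le> \<delta>"
proof -
  define t0 where "t0 = (LEAST t. p \<le> d t)"
  have t0: "p \<le> d t0" unfolding t0_def by (rule LeastI[of _ N]) (rule assms(2))
  have t0N: "t0 \<le> N" unfolding t0_def by (rule Least_le) (rule assms(2))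
  have "t0 \<noteq> 0"
  proof
    assume "t0 = 0" with t0 assms(1) show False by simp
  qed
  then obtain s where s: "t0 = Suc s" by (cases t0) auto
  have "\<not> p \<le> d s" using not_less_Least[of s "\<lambda>t. p \<le> d t"] s unfolding t0_def by auto
  moreover have "\<bar>d (Suc s) - d s\<bar> \<le> \<delta>" using assms(3)[of s] s t0N by auto
  ultimately have "\<bar>d t0 - p\<bar> \<le> \<delta>" using t0 s by auto
  thus ?thesis using t0N by blast
qed




definition mixG :: "(nat \<Rightarrow> nat \<Rightarrow> bool) \<Rightarrow> nat \<Rightarrow> nat \<Rightarrow> nat \<Rightarrow> bool" where
  "mixG B t x y = (if x < t \<and> y < t then B x y else x < y)"

lemma tournament_mixG:
  assumes "tournament n B" shows "tournament n (mixG B t)"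
  unfolding tournament_def
proof (intro conjI allI impI)
  fix i assume i: "i < n"
  have "\<not> B i i" using assms i unfolding tournament_def by blast
  thus "\<not> mixG B t i i" by (simp add: mixG_def)
next
  fix i j assume ij: "i < n" "j < n" "i \<noteq> j"
  show "mixG B t i j = (\<not> mixG B t j i)"
  proof (cases "i < t \<and> j < t")
    case True
    have "B i j = (\<not> B j i)" using assms ij unfolding tournament_def by blast
    thus ?thesis using True by (simp add: mixG_def)
  next
    case False thus ?thesis using ij by (auto simp add: mixG_def)
  qed
qed

lemma no_copy_transitive:
  assumes "\<not> transitive_tournament k H"
  shows "\<not> induces_copy k H (\<lambda>x y. x < y) S"
proof
  assume "induces_copy k H (\<lambda>x y. x < y) S"
  then obtain f where f0: "bij_betw f {0..<k} S \<and> (\<forall>i<k. \<forall>j<k. H i j = (f i < f j))"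
    unfolding induces_copy_def by (rule exE)
  hence f: "\<forall>i<k. \<forall>j<k. H i j = (f i < f j)" by (rule conjunct2)
  have "H i l" if "i < k" "j < k" "l < k" "H i j" "H j l" for i j l
  proof -
    have e1: "H i j = (f i < f j)" using f that(1,2) by simp
    have e2: "H j l = (f j < f l)" using f that(2,3) by simp
    have e3: "H i l = (f i < f l)" using f that(1,3) by simp
    have "f i < f j" using e1 that(4) by simp
    moreover have "f j < f l" using e2 that(5) by simp
    ultimately have "f i < f l" by (rule less_trans)
    thus ?thesis using e3 by simp
  qed
  hence "transitive_tournament k H" unfolding transitive_tournament_def by blast
  thus False using assms by simp
qed

lemma density_mixG0:
  assumes "\<not> transitive_tournament 6 H" "6 \<le> n"
  shows "density 6 H n (mixG B 0) = 0"
proof -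
  have "mixG B 0 = (\<lambda>x y. x < y)" by (auto simp: mixG_def fun_eq_iff)
  hence "copies 6 H n (mixG B 0) = {}" using no_copy_transitive[OF assms(1)] by (auto simp: copies_def)
  thus ?thesis using assms(2) by (simp add: density_copies)
qed

lemma density_mixGn:
  assumes "6 \<le> n"
  shows "density 6 H n (mixG B n) = density 6 H n B"
proof -
  have "copies 6 H n (mixG B n) = copies 6 H n B"
  proof -
    have "induces_copy 6 H (mixG B n) S = induces_copy 6 H B S" if "S \<subseteq> {0..<n}" for S
      by (rule induces_copy_cong) (use that in \<open>auto simp: mixG_def\<close>)
    thus ?thesis unfolding copies_def by blast
  qed
  thus ?thesis using assms by (simp add: density_copies)
qed

lemma density_mixG_step:
  assumes "t < n" "6 \<le> n"
  shows "\<bar>density 6 H n (mixG B (Suc t)) - density 6 H n (mixG B t)\<bar> \<le> 6 / real n"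
proof -
  have d: "\<bar>real (card (copies 6 H n (mixG B (Suc t)))) - real (card (copies 6 H n (mixG B t)))\<bar>
      \<le> real ((n - 1) choose 5)"
    by (rule card_copies_diff[OF assms(1)]) (auto simp: mixG_def)
  have C: "real (n choose 6) > 0" using assms by simp
  have "\<bar>density 6 H n (mixG B (Suc t)) - density 6 H n (mixG B t)\<bar>
     = \<bar>real (card (copies 6 H n (mixG B (Suc t)))) - real (card (copies 6 H n (mixG B t)))\<bar> / real (n choose 6)"
    using assms C by (simp add: density_copies abs_divide flip: diff_divide_distrib)
  also have "\<dots> \<le> real ((n - 1) choose 5) / real (n choose 6)"
    using d C by (simp add: divide_right_mono)
  also have "\<dots> = 6 / real n" by (rule choose_ratio[OF assms(2)])
  finally show ?thesis .
qed

lemma exists_close: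
  assumes "\<not> transitive_tournament 6 H" "6 \<le> n" "tournament n B" "0 < p"
    "p \<le> density 6 H n B" "\<And>x y. x < a \<Longrightarrow> y < a \<Longrightarrow> B x y = (x < y)"
  shows "\<exists>G. tournament n G \<and> (\<forall>x y. x < a \<longrightarrow> y < a \<longrightarrow> G x y = (x < y))
           \<and> \<bar>density 6 H n G - p\<bar> \<le> 6 / real n"
proof -
  define d where "d t = density 6 H n (mixG B t)" for t
  have "\<exists>t\<le>n. \<bar>d t - p\<bar> \<le> 6 / real n"
  proof (rule discrete_ivt)
    show "d 0 < p" using density_mixG0[OF assms(1,2)] assms(4) by (simp add: d_def)
    show "p \<le> d n" using density_mixGn[OF assms(2)] assms(5) by (simp add: d_def)
    show "\<bar>d (Suc t) - d t\<bar> \<le> 6 / real n" if "t < n" for t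
      unfolding d_def by (rule density_mixG_step[OF that assms(2)])
  qed
  then obtain t where "\<bar>d t - p\<bar> \<le> 6 / real n" by blast
  moreover have "tournament n (mixG B t)" by (rule tournament_mixG[OF assms(3)])
  moreover have "\<forall>x y. x < a \<longrightarrow> y < a \<longrightarrow> mixG B t x y = (x < y)" using assms(6) by (simp add: mixG_def)
  ultimately show ?thesis unfolding d_def by blast
qed


lemma finite_automorphisms: "finite (automorphisms m F)"
  by (rule finite_subset[of _ "{p. p permutes {0..<m}}"])
     (auto simp: automorphisms_def intro: finite_permutations)

lemma id_automorphism: "id \<in> automorphisms m F"
  by (simp add: automorphisms_def)

lemma card_aut_ge1: "card (automorphisms m F) \<ge> 1"
proof -
  have "automorphisms m F \<noteq> {}" using id_automorphism by blast
  thus ?thesis using finite_automorphisms[of m F] by (simp add: Suc_le_eq card_gt_0_iff)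
qed

lemma random_density_le: "random_density m F \<le> fact m * (1/2) ^ (m choose 2)"
proof -
  have c: "real (card (automorphisms m F)) \<ge> 1" using card_aut_ge1[of m F] by simp
  have "fact m / real (card (automorphisms m F)) \<le> fact m"
    using c by (simp add: divide_le_eq mult_le_cancel_left1 order_trans[of 1])
  hence "fact m / real (card (automorphisms m F)) * (1/2) ^ (m choose 2) \<le> fact m * (1/2) ^ (m choose 2)"
    by (rule mult_right_mono) simp
  thus ?thesis unfolding random_density_def .
qed

lemma TT_copies:
  assumes agree: "\<forall>x y. x < a \<longrightarrow> y < a \<longrightarrow> G x y = (x < y)" and an: "a \<le> n"
  shows "{S. S \<subseteq> {0..<a} \<and> card S = m} \<subseteq> copies m (\<lambda>i j. i < j) n G"
proof
  fix S assume S: "S \<in> {S. S \<subseteq> {0..<a} \<and> card S = m}"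
  hence Sa: "S \<subseteq> {0..<a}" and cS: "card S = m" by auto
  have fin: "finite S" using Sa by (rule finite_subset) simp
  define xs where "xs = sorted_list_of_set S"
  have dist: "distinct xs" and len: "length xs = m" and set: "set xs = S"
    and ss: "sorted_wrt (<) xs"
    using fin cS by (simp_all add: xs_def)
  have bij: "bij_betw ((!) xs) {0..<m} S"
    by (rule bij_betw_nth) (use dist len set in auto)
  have "(i < j) = G (xs ! i) (xs ! j)" if "i < m" "j < m" for i j
  proof -
    have inS: "xs ! i \<in> S" "xs ! j \<in> S" using that len set nth_mem by (metis)+
    hence "xs ! i < a" "xs ! j < a" using Sa by auto
    hence "G (xs ! i) (xs ! j) = (xs ! i < xs ! j)" using agree by simp
    moreover have "(i < j) = (xs ! i < xs ! j)"
    proof (cases i j rule: linorder_cases)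
      case less thus ?thesis using sorted_wrt_nth_less[OF ss less] that len by simp
    next
      case equal thus ?thesis by simp
    next
      case greater
      have "xs ! j < xs ! i" using sorted_wrt_nth_less[OF ss greater] that len by simp
      thus ?thesis using greater by simp
    qed
    ultimately show ?thesis by simp
  qed
  hence "induces_copy m (\<lambda>i j. i < j) G S" unfolding induces_copy_def using bij by blast
  thus "S \<in> copies m (\<lambda>i j. i < j) n G" using Sa cS an by (auto simp: copies_def)
qed

lemma TT_density:
  assumes agree: "\<forall>x y. x < n div 6 \<longrightarrow> y < n div 6 \<longrightarrow> G x y = (x < y)" and n: "n \<ge> 112"
  shows "fact 16 / 112 ^ 16 \<le> density 16 (\<lambda>i j. i < j) n G"
proof -
  define a where "a = n div 6"
  have an: "a \<le> n" unfolding a_def by simp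
  have a16: "16 \<le> a" using n unfolding a_def by simp
  have a7: "real n \<le> 7 * real a"
  proof -
    have "n \<le> 7 * a" using n unfolding a_def by linarith
    thus ?thesis by (metis of_nat_le_iff of_nat_mult of_nat_numeral)
  qed
  have npos: "real n > 0" using n by simp
  have "a choose 16 = card {S. S \<subseteq> {0..<a} \<and> card S = 16}" by (simp add: n_subsets)
  also have "\<dots> \<le> card (copies 16 (\<lambda>i j. i < j) n G)"
    by (rule card_mono[OF finite_copies TT_copies]) (use agree an in \<open>auto simp: a_def\<close>)
  finally have c1: "real (a choose 16) \<le> real (card (copies 16 (\<lambda>i j. i < j) n G))" by simp
  have c2: "(real a / 16) ^ 16 \<le> real (a choose 16)"
    using binomial_ge_n_over_k_pow_k[OF a16] by simp
  have c3: "real (n choose 16) * fact 16 \<le> real n ^ 16"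
  proof -
    have "(n choose 16) * fact 16 \<le> n ^ 16" by (rule binomial_fact_pow)
    hence "real ((n choose 16) * fact 16) \<le> real (n ^ 16)" by (simp only: of_nat_le_iff)
    thus ?thesis by simp
  qed
  have Cpos: "real (n choose 16) > 0" using n by simp
  have "fact 16 / 112 ^ 16 = fact 16 * (real n / (7 * 16)) ^ 16 / real n ^ 16"
    using npos by (simp add: power_divide)
  also have "\<dots> \<le> fact 16 * (real a / 16) ^ 16 / real n ^ 16"
  proof -
    have "real n / (7 * 16) \<le> real a / 16" using a7 by simp
    hence "(real n / (7 * 16)) ^ 16 \<le> (real a / 16) ^ 16" by (rule power_mono) (use npos in simp)
    thus ?thesis using npos by (simp add: divide_right_mono)
  qed
  also have "\<dots> \<le> fact 16 * (real a / 16) ^ 16 / (real (n choose 16) * fact 16)"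
    by (rule divide_left_mono) (use c3 Cpos in auto)
  also have "\<dots> = (real a / 16) ^ 16 / real (n choose 16)" by simp
  also have "\<dots> \<le> real (card (copies 16 (\<lambda>i j. i < j) n G)) / real (n choose 16)"
    by (rule divide_right_mono) (use c1 c2 in auto)
  also have "\<dots> = density 16 (\<lambda>i j. i < j) n G" using n by (simp add: density_copies)
  finally show ?thesis .
qed

lemma TT_tournament: "tournament m (\<lambda>i j. i < j)"
  unfolding tournament_def by auto

lemma rd_TT_lt: "random_density 16 (\<lambda>i j::nat. i < j) < fact 16 / 112 ^ 16"
proof -
  have "random_density 16 (\<lambda>i j::nat. i < j) \<le> fact 16 * (1/2) ^ (16 choose 2)" by (rule random_density_le)
  also have "(16 choose 2) = (120::nat)" by (simp add: choose_two)
  also have "fact 16 * (1/2) ^ 120 < (fact 16 / 112 ^ 16 :: real)"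
  proof -
    have e: "(1/2::real)^120 = 1/2^120" by (simp add: power_one_over)
    have "(112::real)^16 < 2^120" by simp
    hence "1/(2::real)^120 < 1/112^16" by (intro divide_strict_left_mono) auto
    hence "fact 16 * (1/(2::real)^120) < fact 16 * (1/112^16)" by (intro mult_strict_left_mono) auto
    thus ?thesis using e by simp
  qed
  finally show ?thesis .
qed

lemma core:
  assumes nt: "\<not> transitive_tournament 6 H"
    and pos: "0 < random_density 6 H"
    and big: "\<And>n. n \<ge> N0 \<Longrightarrow> \<exists>B. tournament n B \<and>
       (\<forall>x y. x < n div 6 \<longrightarrow> y < n div 6 \<longrightarrow> B x y = (x < y)) \<and> random_density 6 H \<le> density 6 H n B"
  shows "\<not> quasirandom_forcing 6 H"
proof
  assume qf: "quasirandom_forcing 6 H"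
  define N where "N = max N0 112"
  define p where "p = random_density 6 H"
  define P where "P n G \<longleftrightarrow> tournament n G \<and> (\<forall>x y. x < n div 6 \<longrightarrow> y < n div 6 \<longrightarrow> G x y = (x < y))
      \<and> \<bar>density 6 H n G - p\<bar> \<le> 6 / real n" for n G
  have ex: "\<exists>G. P n G" if "n \<ge> N" for n
  proof -
    have "N0 \<le> n" using that by (simp add: N_def)
    then obtain B where B: "tournament n B" "\<forall>x y. x < n div 6 \<longrightarrow> y < n div 6 \<longrightarrow> B x y = (x < y)"
      "p \<le> density 6 H n B" using big unfolding p_def by blast
    show ?thesis unfolding P_def
      by (rule exists_close[OF nt _ B(1) _ B(3)]) (use that pos B(2) in \<open>auto simp: N_def p_def\<close>)
  qed
  define Gs where "Gs i = (i + N, SOME G. P (i + N) G)" for i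
  have PG: "P (fst (Gs i)) (snd (Gs i))" for i
    unfolding Gs_def using someI_ex[OF ex[of "i + N"]] by simp
  have fstG: "fst (Gs i) = i + N" for i by (simp add: Gs_def)
  have tour: "\<forall>i. tournament (fst (Gs i)) (snd (Gs i))" using PG unfolding P_def by blast
  have lim: "filterlim (\<lambda>i. fst (Gs i)) at_top sequentially"
    unfolding fstG by (rule filterlim_add_const_nat_at_top)
  have dens: "(\<lambda>i. density 6 H (fst (Gs i)) (snd (Gs i))) \<longlonglongrightarrow> random_density 6 H"
  proof -
    have z: "(\<lambda>i. 6 / real (i + N)) \<longlonglongrightarrow> 0"
      using LIMSEQ_ignore_initial_segment[OF lim_const_over_n[of "6::real"], of N] by simp
    have b: "\<bar>density 6 H (fst (Gs i)) (snd (Gs i)) - p\<bar> \<le> 6 / real (i + N)" for i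
      using PG[of i] unfolding P_def fstG by blast
    have l: "(\<lambda>i. p - 6 / real (i + N)) \<longlonglongrightarrow> p" using tendsto_diff[OF tendsto_const z] by simp
    have u: "(\<lambda>i. p + 6 / real (i + N)) \<longlonglongrightarrow> p" using tendsto_add[OF tendsto_const z] by simp
    show ?thesis unfolding p_def[symmetric]
    proof (rule tendsto_sandwich[OF _ _ l u])
      show "\<forall>\<^sub>F i in sequentially. p - 6 / real (i + N) \<le> density 6 H (fst (Gs i)) (snd (Gs i))"
      proof (intro always_eventually allI)
        fix i show "p - 6 / real (i + N) \<le> density 6 H (fst (Gs i)) (snd (Gs i))" using b[of i] unfolding abs_le_iff by linarith
      qed
      show "\<forall>\<^sub>F i in sequentially. density 6 H (fst (Gs i)) (snd (Gs i)) \<le> p + 6 / real (i + N)"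
      proof (intro always_eventually allI)
        fix i show "density 6 H (fst (Gs i)) (snd (Gs i)) \<le> p + 6 / real (i + N)" using b[of i] unfolding abs_le_iff by linarith
      qed
    qed
  qed
  have "quasirandom Gs" using qf tour lim dens unfolding quasirandom_forcing_def by blast
  hence conv: "(\<lambda>i. density 16 (\<lambda>i j. i < j) (fst (Gs i)) (snd (Gs i))) \<longlonglongrightarrow> random_density 16 (\<lambda>i j::nat. i < j)"
    unfolding quasirandom_def using TT_tournament by blast
  have "eventually (\<lambda>i. density 16 (\<lambda>i j. i < j) (fst (Gs i)) (snd (Gs i))  < fact 16 / 112 ^ 16) sequentially"
    by (rule order_tendstoD(2)[OF conv rd_TT_lt])
  moreover have "fact 16 / 112 ^ 16 \<le> density 16 (\<lambda>i j. i < j) (fst (Gs i)) (snd (Gs i))" for i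
  proof (rule TT_density)
    show "\<forall>x y. x < fst (Gs i) div 6 \<longrightarrow> y < fst (Gs i) div 6 \<longrightarrow> snd (Gs i) x y = (x < y)"
      using PG[of i] unfolding P_def by blast
    show "112 \<le> fst (Gs i)" unfolding fstG N_def by simp
  qed
  ultimately have "eventually (\<lambda>i. False) sequentially" by (auto elim: eventually_mono simp: not_le[symmetric])
  thus False by simp
qed


lemma less6: "(i::nat) < 6 \<longleftrightarrow> i = 0 \<or> i = 1 \<or> i = 2 \<or> i = 3 \<or> i = 4 \<or> i = 5"
  by auto

definition blow :: "(nat \<Rightarrow> nat \<Rightarrow> bool) \<Rightarrow> (nat \<Rightarrow> nat) \<Rightarrow> nat \<Rightarrow> nat \<Rightarrow> bool" where
  "blow H \<rho> x y = (if \<rho> x = \<rho> y then x < y else H (\<rho> x) (\<rho> y))"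

lemma tournament_blow:
  assumes "tournament 6 H" "\<And>x. \<rho> x < 6"
  shows "tournament n (blow H \<rho>)"
  unfolding tournament_def
proof (intro conjI allI impI)
  fix i show "\<not> blow H \<rho> i i" by (simp add: blow_def)
next
  fix i j assume ij: "i < n" "j < n" "i \<noteq> j"
  show "blow H \<rho> i j = (\<not> blow H \<rho> j i)"
  proof (cases "\<rho> i = \<rho> j")
    case True thus ?thesis using ij by (auto simp: blow_def)
  next
    case False
    have "H (\<rho> i) (\<rho> j) = (\<not> H (\<rho> j) (\<rho> i))"
      using assms(1) assms(2)[of i] assms(2)[of j] False unfolding tournament_def by blast
    thus ?thesis using False by (simp add: blow_def)
  qed
qed

lemma blow_agree:
  assumes "\<And>x. x < a \<Longrightarrow> \<rho> x = c"
  shows "\<forall>x y. x < a \<longrightarrow> y < a \<longrightarrow> blow H \<rho> x y = (x < y)"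
  using assms by (simp add: blow_def)

lemma list_copy:
  assumes "sorted_wrt (<) xs" "length xs = 6" "set xs \<subseteq> {0..<n}"
    "\<forall>i<6. \<forall>j<6. H i j = G (xs!i) (xs!j)"
  shows "set xs \<in> copies 6 H n G"
proof -
  have d: "distinct xs" using assms(1) by (simp add: strict_sorted_iff)
  have "bij_betw ((!) xs) {0..<6} (set xs)" by (rule bij_betw_nth) (use d assms(2) in auto)
  hence "induces_copy 6 H G (set xs)" unfolding induces_copy_def using assms(4) by blast
  moreover have "card (set xs) = 6" using d assms(2) distinct_card by metis
  ultimately show ?thesis using assms(3) by (simp add: copies_def)
qed

lemma lists_count:
  assumes "\<And>xs. xs \<in> L \<Longrightarrow> sorted_wrt (<) xs \<and> length xs = 6 \<and> set xs \<subseteq> {0..<n} \<and>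
     (\<forall>i<6. \<forall>j<6. H i j = G (xs!i) (xs!j))"
  shows "card L \<le> card (copies 6 H n G)"
proof -
  have inj: "inj_on set L"
  proof (rule inj_onI)
    fix xs ys assume "xs \<in> L" "ys \<in> L" "set xs = set ys"
    thus "xs = ys" using assms strict_sorted_equal by metis
  qed
  have "card L = card (set ` L)" using card_image[OF inj] by simp
  also have "\<dots> \<le> card (copies 6 H n G)"
  proof (rule card_mono[OF finite_copies])
    show "set ` L \<subseteq> copies 6 H n G"
    proof
      fix S assume "S \<in> set ` L"
      then obtain xs where xs: "xs \<in> L" "S = set xs" by blast
      show "S \<in> copies 6 H n G" using assms[OF xs(1)] xs(2) list_copy by blast
    qed
  qed
  finally show ?thesis .
qed

definition blk :: "nat \<Rightarrow> nat \<Rightarrow> nat set" where "blk q k = {k * q..<Suc k * q}"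

lemma card_blk: "card (blk q k) = q"
  by (simp add: blk_def)

lemma div_blk: "x \<in> blk q k \<Longrightarrow> x div q = k"
  unfolding blk_def by (intro div_nat_eqI) (auto simp: mult.commute)

lemma dens_from_count:
  assumes "K \<le> card (copies 6 H n G)" "6 \<le> n"
  shows "720 * real K / real n ^ 6 \<le> density 6 H n G"
proof -
  have C: "real (n choose 6) > 0" using assms(2) by simp
  have "(n choose 6) * fact 6 \<le> n ^ 6" by (rule binomial_fact_pow)
  hence "real ((n choose 6) * fact 6) \<le> real (n ^ 6)" by (simp only: of_nat_le_iff)
  hence c3: "real (n choose 6) * 720 \<le> real n ^ 6" by (simp add: fact_numeral)
  have K: "real K \<le> real (card (copies 6 H n G))" using assms(1) by simp
  have "720 * real K / real n ^ 6 \<le> 720 * real K / (real (n choose 6) * 720)"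
    by (rule divide_left_mono) (use c3 C in auto)
  also have "\<dots> = real K / real (n choose 6)" by simp
  also have "\<dots> \<le> real (card (copies 6 H n G)) / real (n choose 6)"
    by (rule divide_right_mono) (use K in auto)
  also have "\<dots> = density 6 H n G" using assms(2) by (simp add: density_copies)
  finally show ?thesis .
qed

subsection \<open>Balanced blow-up\<close>

definition rho_bal :: "nat \<Rightarrow> nat \<Rightarrow> nat" where "rho_bal q x = min 5 (x div q)"

lemma bal_count:
  assumes tH: "tournament 6 H" and q: "q \<ge> 1" and qn: "6 * q \<le> n"
  shows "q ^ 6 \<le> card (copies 6 H n (blow H (rho_bal q)))"
proof -
  define D where "D = blk q 0 \<times> blk q 1 \<times> blk q 2 \<times> blk q 3 \<times> blk q 4 \<times> blk q 5"
  define lst where "lst = (\<lambda>(a,b,c,d,e,g). [a,b,c,d,e,g::nat])"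
  have cardD: "card D = q ^ 6" by (simp add: D_def card_cartesian_product card_blk numeral_eq_Suc)
  have inj: "inj_on lst D" by (auto simp: lst_def inj_on_def)
  have "q ^ 6 = card (lst ` D)" using card_image[OF inj] cardD by simp
  also have "\<dots> \<le> card (copies 6 H n (blow H (rho_bal q)))"
  proof (rule lists_count)
    fix xs assume "xs \<in> lst ` D"
    then obtain a b c d e g where abc: "a \<in> blk q 0" "b \<in> blk q 1" "c \<in> blk q 2" "d \<in> blk q 3"
      "e \<in> blk q 4" "g \<in> blk q 5" and xs: "xs = [a,b,c,d,e,g]"
      unfolding D_def lst_def by auto
    have ineq: "a < b" "b < c" "c < d" "d < e" "e < g" "g < n" using abc qn by (auto simp: blk_def)
    have sorted: "sorted_wrt (<) xs" using ineq by (simp add: xs)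
    have sub: "set xs \<subseteq> {0..<n}" using ineq by (auto simp: xs)
    have rho: "rho_bal q (xs ! i) = i" if "i < 6" for i
      using that div_blk[OF abc(1)] div_blk[OF abc(2)] div_blk[OF abc(3)] div_blk[OF abc(4)]
        div_blk[OF abc(5)] div_blk[OF abc(6)]
      by (auto simp: less6 xs rho_bal_def)
    have emb: "H i j = blow H (rho_bal q) (xs!i) (xs!j)" if "i < 6" "j < 6" for i j
    proof (cases "i = j")
      case True
      have "\<not> H i i" using tH that(1) unfolding tournament_def by blast
      thus ?thesis using True by (simp add: blow_def)
    next
      case False thus ?thesis using rho[OF that(1)] rho[OF that(2)] by (simp add: blow_def)
    qed
    show "sorted_wrt (<) xs \<and> length xs = 6 \<and> set xs \<subseteq> {0..<n} \<and>
       (\<forall>i<6. \<forall>j<6. H i j = blow H (rho_bal q) (xs!i) (xs!j))"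
      using sorted sub emb by (simp add: xs)
  qed
  finally show ?thesis .
qed

lemma bal_main:
  assumes tH: "tournament 6 H" and n: "n \<ge> 105"
  shows "\<exists>B. tournament n B \<and> (\<forall>x y. x < n div 6 \<longrightarrow> y < n div 6 \<longrightarrow> B x y = (x < y))
     \<and> 360 / 2 ^ 15 \<le> density 6 H n B"
proof -
  define q where "q = n div 6"
  have q1: "q \<ge> 1" and qn: "6 * q \<le> n" using n by (auto simp: q_def)
  have tB: "tournament n (blow H (rho_bal q))" by (rule tournament_blow[OF tH]) (simp add: rho_bal_def)
  have ag: "\<forall>x y. x < n div 6 \<longrightarrow> y < n div 6 \<longrightarrow> blow H (rho_bal q) x y = (x < y)"
    by (rule blow_agree[where c=0]) (simp add: rho_bal_def q_def)
  have d: "720 * real (q ^ 6) / real n ^ 6 \<le> density 6 H n (blow H (rho_bal q))"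
    by (rule dens_from_count[OF bal_count[OF tH q1 qn]]) (use n in simp)
  have "10 * n \<le> 63 * q" using n unfolding q_def by linarith
  hence "real (10 * n) \<le> real (63 * q)" by (simp only: of_nat_le_iff)
  hence "(10 * real n) ^ 6 \<le> (63 * real q) ^ 6" by (intro power_mono) auto
  hence h: "10 ^ 6 * real n ^ 6 \<le> 63 ^ 6 * real q ^ 6" by (simp add: power_mult_distrib)
  have npos: "real n ^ 6 > 0" using n by simp
  have q6: "real q ^ 6 \<ge> 0" by simp
  have h': "1000000 * real n ^ 6 \<le> 62523502209 * real q ^ 6" using h by simp
  have h2: "real n ^ 6 \<le> 65536 * real q ^ 6" using h' q6 by linarith
  have "360 / 2 ^ 15 \<le> 720 * real q ^ 6 / real n ^ 6"
    using h2 npos by (simp add: divide_le_eq le_divide_eq)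
  hence "360 / 2 ^ 15 \<le> density 6 H n (blow H (rho_bal q))" using d by simp
  thus ?thesis using tB ag by blast
qed


subsection \<open>Twin blow-up\<close>

lemma card_pairs: "2 * card {(x, y). x < y \<and> y < (m::nat)} = m * (m - 1)"
proof (induction m)
  case 0 thus ?case by simp
next
  case (Suc m)
  have eq: "{(x, y). x < y \<and> y < Suc m} = {(x, y). x < y \<and> y < m} \<union> (\<lambda>x. (x, m)) ` {0..<m}"
    by auto
  have fin: "finite {(x, y). x < y \<and> y < m}"
    by (rule finite_subset[of _ "{0..<m} \<times> {0..<m}"]) auto
  have disj: "{(x, y). x < y \<and> y < m} \<inter> (\<lambda>x. (x, m)) ` {0..<m} = {}" by auto
  have "card {(x, y). x < y \<and> y < Suc m} = card {(x, y). x < y \<and> y < m} + m"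
    unfolding eq by (subst card_Un_disjoint[OF fin _ disj]) (auto simp: card_image inj_on_def)
  hence "2 * card {(x, y). x < y \<and> y < Suc m} = m * (m - 1) + 2 * m" using Suc.IH by simp
  also have "\<dots> = Suc m * (Suc m - 1)" by (cases m) (auto simp: algebra_simps)
  finally show ?case .
qed

definition rho_tw :: "nat \<Rightarrow> nat \<Rightarrow> nat" where
  "rho_tw q x = (if x div q \<le> 1 then 0 else min 5 (x div q))"

lemma tw_count:
  assumes tH: "tournament 6 H" and h01: "H 0 1"
    and tw: "\<And>j. 2 \<le> j \<Longrightarrow> j < 6 \<Longrightarrow> (H 1 j = H 0 j) \<and> (H j 1 = H j 0)"
    and q: "q \<ge> 1" and qn: "6 * q \<le> n"
  shows "card {(x, y). x < y \<and> y < 2 * q} * q ^ 4 \<le> card (copies 6 H n (blow H (rho_tw q)))"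
proof -
  define P where "P = {(x, y). x < y \<and> y < 2 * q}"
  define D where "D = P \<times> blk q 2 \<times> blk q 3 \<times> blk q 4 \<times> blk q 5"
  define lst where "lst = (\<lambda>((x,y),c,d,e,g). [x,y,c,d,e,g::nat])"
  have cardD: "card D = card P * q ^ 4" by (simp add: D_def card_cartesian_product card_blk numeral_eq_Suc)
  have inj: "inj_on lst D" by (auto simp: lst_def inj_on_def)
  have "card P * q ^ 4 = card (lst ` D)" using card_image[OF inj] cardD by simp
  also have "\<dots> \<le> card (copies 6 H n (blow H (rho_tw q)))"
  proof (rule lists_count)
    fix xs assume "xs \<in> lst ` D"
    then obtain a b c d e g where abc: "a < b" "b < 2 * q" "c \<in> blk q 2" "d \<in> blk q 3"
      "e \<in> blk q 4" "g \<in> blk q 5" and xs: "xs = [a,b,c,d,e,g]"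
      unfolding D_def lst_def P_def by auto
    have ineq: "a < b" "b < c" "c < d" "d < e" "e < g" "g < n" using abc qn by (auto simp: blk_def)
    have sorted: "sorted_wrt (<) xs" using ineq by (simp add: xs)
    have sub: "set xs \<subseteq> {0..<n}" using ineq by (auto simp: xs)
    have ab: "a div q \<le> 1" "b div q \<le> 1"
      using abc(1,2) q by (auto simp: less_Suc_eq_le[symmetric] div_less_iff_less_mult)
    have rho: "rho_tw q (xs ! i) = (if i \<le> 1 then 0 else i)" if "i < 6" for i
      using that ab div_blk[OF abc(3)] div_blk[OF abc(4)]
        div_blk[OF abc(5)] div_blk[OF abc(6)]
      by (auto simp: less6 xs rho_tw_def)
    have Hii: "\<not> H i i" if "i < 6" for i using tH that unfolding tournament_def by blast
    have "H 0 1 = (\<not> H 1 0)" using tH unfolding tournament_def by (metis zero_less_numeral one_less_numeral_iff semiring_norm(76) zero_neq_one)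
    hence h10: "\<not> H 1 0" using h01 by simp
    have emb: "H i j = blow H (rho_tw q) (xs!i) (xs!j)" if "i < 6" "j < 6" for i j
    proof -
      have ri: "rho_tw q (xs ! i) = (if i \<le> 1 then 0 else i)" by (rule rho[OF that(1)])
      have rj: "rho_tw q (xs ! j) = (if j \<le> 1 then 0 else j)" by (rule rho[OF that(2)])
      show ?thesis
      proof (cases "i \<le> 1")
        case i: True
        show ?thesis
        proof (cases "j \<le> 1")
          case j: True
          have "i = 0 \<or> i = 1" "j = 0 \<or> j = 1" using i j by auto
          thus ?thesis using ri rj h01 h10 Hii[of 0] Hii[of 1] ineq by (auto simp: blow_def xs)
        next
          case j: False
          have "i = 0 \<or> i = 1" using i by auto
          hence "H i j = H 0 j" using tw[of j] j that(2) by (elim disjE) auto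
          thus ?thesis using ri rj i j by (simp add: blow_def)
        qed
      next
        case i: False
        show ?thesis
        proof (cases "j \<le> 1")
          case j: True
          have "j = 0 \<or> j = 1" using j by auto
          hence "H i j = H i 0" using tw[of i] i that(1) by (elim disjE) auto
          thus ?thesis using ri rj i j by (simp add: blow_def)
        next
          case j: False
          show ?thesis
          proof (cases "i = j")
            case True thus ?thesis using Hii[OF that(1)] ri by (simp add: blow_def)
          next
            case False thus ?thesis using ri rj i j by (simp add: blow_def)
          qed
        qed
      qed
    qed
    show "sorted_wrt (<) xs \<and> length xs = 6 \<and> set xs \<subseteq> {0..<n} \<and>
       (\<forall>i<6. \<forall>j<6. H i j = blow H (rho_tw q) (xs!i) (xs!j))"
      using sorted sub emb by (simp add: xs)
  qed
  finally show ?thesis unfolding P_def .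
qed

lemma tw_construct:
  assumes tH: "tournament 6 H" and h01: "H 0 1"
    and tw: "\<And>j. 2 \<le> j \<Longrightarrow> j < 6 \<Longrightarrow> (H 1 j = H 0 j) \<and> (H j 1 = H j 0)"
    and n: "n \<ge> 400"
  shows "\<exists>B. tournament n B \<and> (\<forall>x y. x < n div 6 \<longrightarrow> y < n div 6 \<longrightarrow> B x y = (x < y))
     \<and> 720 / 2 ^ 15 \<le> density 6 H n B"
proof -
  define q where "q = n div 6"
  have q1: "q \<ge> 10" and qn: "6 * q \<le> n" using n by (auto simp: q_def)
  have tB: "tournament n (blow H (rho_tw q))" by (rule tournament_blow[OF tH]) (auto simp: rho_tw_def min_def)
  have ag: "\<forall>x y. x < n div 6 \<longrightarrow> y < n div 6 \<longrightarrow> blow H (rho_tw q) x y = (x < y)"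
    by (rule blow_agree[where c=0]) (simp add: rho_tw_def q_def)
  define K where "K = card {(x, y). x < y \<and> y < 2 * q} * q ^ 4"
  have d: "720 * real K / real n ^ 6 \<le> density 6 H n (blow H (rho_tw q))"
    by (rule dens_from_count[OF tw_count[OF tH h01 tw _ qn, folded K_def]]) (use n q1 in auto)
  have cp: "2 * card {(x, y). x < y \<and> y < 2 * q} = 2 * q * (2 * q - 1)" by (rule card_pairs)
  hence "card {(x, y). x < y \<and> y < 2 * q} = q * (2 * q - 1)" by simp
  hence "real K = real q * (2 * real q - 1) * real q ^ 4" using q1 by (simp add: K_def of_nat_diff)
  also have "\<dots> = real q ^ 5 * (2 * real q - 1)" by (simp add: numeral_eq_Suc mult_ac)
  finally have K: "real K = real q ^ 5 * (2 * real q - 1)" .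
  have A: "real q ^ 5 * (19 / 10 * real q) \<le> real q ^ 5 * (2 * real q - 1)"
    by (rule mult_left_mono) (use q1 in auto)
  have B: "real q ^ 5 * (19 / 10 * real q) = 19 / 10 * real q ^ 6" by (simp add: numeral_eq_Suc mult_ac)
  have K2: "19 / 10 * real q ^ 6 \<le> real K" unfolding K B[symmetric] by (rule A)
  have "10 * n \<le> 61 * q" using n unfolding q_def by linarith
  hence "real (10 * n) \<le> real (61 * q)" by (simp only: of_nat_le_iff)
  hence "(10 * real n) ^ 6 \<le> (61 * real q) ^ 6" by (intro power_mono) auto
  hence h: "10 ^ 6 * real n ^ 6 \<le> 61 ^ 6 * real q ^ 6" by (simp add: power_mult_distrib)
  have h': "1000000 * real n ^ 6 \<le> 51520374361 * real q ^ 6" using h by simp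
  have q6: "real q ^ 6 \<ge> 0" by simp
  have h2: "real n ^ 6 \<le> 32768 * real K" using h' q6 K2 by linarith
  have npos: "real n ^ 6 > 0" using n by simp
  have "720 / 2 ^ 15 \<le> 720 * real K / real n ^ 6"
    using h2 npos by (simp add: divide_le_eq le_divide_eq)
  hence "720 / 2 ^ 15 \<le> density 6 H n (blow H (rho_tw q))" using d by simp
  thus ?thesis using tB ag by blast
qed


lemma relabel_copies:
  assumes sg: "\<sigma> permutes {0..<6}"
  shows "copies 6 (\<lambda>i j. H (\<sigma> i) (\<sigma> j)) n G \<subseteq> copies 6 H n G"
proof
  fix S assume S: "S \<in> copies 6 (\<lambda>i j. H (\<sigma> i) (\<sigma> j)) n G"
  then obtain f where f0: "bij_betw f {0..<6} S \<and> (\<forall>i<6. \<forall>j<6. H (\<sigma> i) (\<sigma> j) = G (f i) (f j))"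
    unfolding copies_def induces_copy_def by (auto)
  have bi: "bij_betw (inv \<sigma>) {0..<6} {0..<6}" by (rule permutes_imp_bij[OF permutes_inv[OF sg]])
  have bf: "bij_betw (f \<circ> inv \<sigma>) {0..<6} S" by (rule bij_betw_trans[OF bi]) (use f0 in blast)
  have "H i j = G ((f \<circ> inv \<sigma>) i) ((f \<circ> inv \<sigma>) j)" if "i < 6" "j < 6" for i j
  proof -
    have "inv \<sigma> i < 6" "inv \<sigma> j < 6" using bij_betwE[OF bi] that by auto
    hence "H (\<sigma> (inv \<sigma> i)) (\<sigma> (inv \<sigma> j)) = G (f (inv \<sigma> i)) (f (inv \<sigma> j))" using f0 by blast
    thus ?thesis using permutes_inverses(1)[OF sg] by simp
  qed
  hence "induces_copy 6 H G S" unfolding induces_copy_def using bf by blast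
  thus "S \<in> copies 6 H n G" using S by (simp add: copies_def)
qed

lemma density_mono_copies:
  assumes "k \<le> n" "copies k H n G \<subseteq> copies k H' n G"
  shows "density k H n G \<le> density k H' n G"
proof -
  have "card (copies k H n G) \<le> card (copies k H' n G)" by (rule card_mono[OF finite_copies assms(2)])
  thus ?thesis using assms(1) by (simp add: density_copies divide_right_mono)
qed

lemma twin_main:
  assumes tH: "tournament 6 H" and tw: "twins 6 H u v" and huv: "H u v" and n: "n \<ge> 400"
  shows "\<exists>B. tournament n B \<and> (\<forall>x y. x < n div 6 \<longrightarrow> y < n div 6 \<longrightarrow> B x y = (x < y))
     \<and> 720 / 2 ^ 15 \<le> density 6 H n B"
proof -
  have u: "u < 6" and v: "v < 6" and uv: "u \<noteq> v"
    and t1: "\<And>w. w < 6 \<Longrightarrow> w \<noteq> v \<Longrightarrow> H u w \<Longrightarrow> H v w"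
    and t2: "\<And>w. w < 6 \<Longrightarrow> w \<noteq> u \<Longrightarrow> H v w \<Longrightarrow> H u w"
    using tw unfolding twins_def by blast+
  define w where "w = Transposition.transpose 0 u v"
  define \<sigma> where "\<sigma> = Transposition.transpose 0 u \<circ> Transposition.transpose 1 w"
  have w6: "w < 6" using u v by (simp add: w_def transpose_def)
  have w0: "w \<noteq> 0" using uv by (auto simp: w_def transpose_def)
  have sg: "\<sigma> permutes {0..<6}" unfolding \<sigma>_def
    by (rule permutes_compose) (rule permutes_swap_id, use w6 u in auto)+
  have s0: "\<sigma> 0 = u" using w0 by (simp add: \<sigma>_def transpose_def)
  have s1: "\<sigma> 1 = v" by (auto simp: \<sigma>_def w_def transpose_def)
  have sin: "\<sigma> i < 6" if "i < 6" for i using permutes_in_image[OF sg] that by simp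
  have sinj: "\<sigma> i = \<sigma> j \<Longrightarrow> i = j" for i j using permutes_inj[OF sg] by (simp add: inj_eq)
  define H' where "H' i j = H (\<sigma> i) (\<sigma> j)" for i j
  have tH': "tournament 6 H'" unfolding tournament_def
  proof (intro conjI allI impI)
    fix i :: nat assume "i < 6" thus "\<not> H' i i" using tH sin unfolding tournament_def H'_def by blast
  next
    fix i j :: nat assume ij: "i < 6" "j < 6" "i \<noteq> j"
    have "\<sigma> i \<noteq> \<sigma> j" using sinj ij(3) by blast
    thus "H' i j = (\<not> H' j i)" using tH sin[OF ij(1)] sin[OF ij(2)] unfolding tournament_def H'_def by blast
  qed
  have h01: "H' 0 1" using huv s0 s1 by (simp add: H'_def)
  have twH': "(H' 1 j = H' 0 j) \<and> (H' j 1 = H' j 0)" if "2 \<le> j" "j < 6" for j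
  proof -
    have nu: "\<sigma> j \<noteq> u" using sinj[of j 0] s0 that by auto
    have nv: "\<sigma> j \<noteq> v" using sinj[of j 1] s1 that by auto
    have sj: "\<sigma> j < 6" using sin that by simp
    have e1: "H v (\<sigma> j) = H u (\<sigma> j)" using t1[OF sj nv] t2[OF sj nu] by blast
    have e2: "H (\<sigma> j) v = (\<not> H v (\<sigma> j))" using tH sj v nv unfolding tournament_def by blast
    have e3: "H (\<sigma> j) u = (\<not> H u (\<sigma> j))" using tH sj u nu unfolding tournament_def by blast
    show ?thesis unfolding H'_def s0 s1 using e1 e2 e3 by simp
  qed
  obtain B where B: "tournament n B" "\<forall>x y. x < n div 6 \<longrightarrow> y < n div 6 \<longrightarrow> B x y = (x < y)"
    "720 / 2 ^ 15 \<le> density 6 H' n B"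
    using tw_construct[OF tH' h01 twH' n] by blast
  have "density 6 H' n B \<le> density 6 H n B"
  proof (rule density_mono_copies)
    have eqH: "H' = (\<lambda>i j. H (\<sigma> i) (\<sigma> j))" by (intro ext) (simp add: H'_def)
    show "copies 6 H' n B \<subseteq> copies 6 H n B" unfolding eqH by (rule relabel_copies[OF sg])
  qed (use n in simp)
  thus ?thesis using B by force
qed

theorem proposition3p2:
  fixes H :: "nat \<Rightarrow> nat \<Rightarrow> bool"
  assumes "tournament 6 H"
    and "\<not> transitive_tournament 6 H"
    and "has_twins 6 H \<or> has_nontrivial_automorphism 6 H"
  shows "\<not> quasirandom_forcing 6 H"
proof -
  have c1: "real (card (automorphisms 6 H)) \<ge> 1" using card_aut_ge1[of 6 H] by simp
  have rd: "random_density 6 H = 720 / real (card (automorphisms 6 H)) / 2 ^ 15"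
    by (simp add: random_density_def fact_numeral choose_two power_one_over)
  have pos: "0 < random_density 6 H" using c1 rd by simp
  from assms(3) show ?thesis
  proof
    assume "has_twins 6 H"
    then obtain u v where tw: "twins 6 H u v" unfolding has_twins_def by blast
    have "\<exists>u v. twins 6 H u v \<and> H u v"
    proof (cases "H u v")
      case True thus ?thesis using tw by blast
    next
      case False
      have u: "u < 6" "v < 6" "u \<noteq> v" using tw unfolding twins_def by auto
      have "H u v = (\<not> H v u)" using assms(1) u unfolding tournament_def by blast
      hence "H v u" using False by simp
      moreover have "twins 6 H v u" using tw unfolding twins_def by (simp add: conj_commute)
      ultimately show ?thesis by blast
    qed
    then obtain u v where tw: "twins 6 H u v" and huv: "H u v" by blast
    have "720 / real (card (automorphisms 6 H)) \<le> 720" using c1 by (simp add: divide_le_eq)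
    hence rd1: "random_density 6 H \<le> 720 / 2 ^ 15" unfolding rd by (rule divide_right_mono) simp
    show ?thesis
    proof (rule core[OF assms(2) pos])
      fix n :: nat assume "n \<ge> 400"
      show "\<exists>B. tournament n B \<and> (\<forall>x y. x < n div 6 \<longrightarrow> y < n div 6 \<longrightarrow> B x y = (x < y))
         \<and> random_density 6 H \<le> density 6 H n B"
      proof -
        obtain B where B: "tournament n B" "\<forall>x y. x < n div 6 \<longrightarrow> y < n div 6 \<longrightarrow> B x y = (x < y)"
          "720 / 2 ^ 15 \<le> density 6 H n B" using twin_main[OF assms(1) tw huv] \<open>n \<ge> 400\<close> by blast
        have "random_density 6 H \<le> density 6 H n B" using rd1 B(3) by (rule order_trans)
        thus ?thesis using B(1,2) by blast
      qed
    qed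
  next
    assume "has_nontrivial_automorphism 6 H"
    then obtain p where p: "p \<in> automorphisms 6 H" "p \<noteq> id"
      unfolding has_nontrivial_automorphism_def by blast
    have "{id, p} \<subseteq> automorphisms 6 H" using p id_automorphism by blast
    hence "card {id, p} \<le> card (automorphisms 6 H)" by (rule card_mono[OF finite_automorphisms])
    hence c2: "real (card (automorphisms 6 H)) \<ge> 2" using p(2) by simp
    have "720 / real (card (automorphisms 6 H)) \<le> 360" using c2 by (simp add: divide_le_eq)
    hence rd2: "random_density 6 H \<le> 360 / 2 ^ 15" unfolding rd by (rule divide_right_mono) simp
    show ?thesis
    proof (rule core[OF assms(2) pos])
      fix n :: nat assume "n \<ge> 105"
      show "\<exists>B. tournament n B \<and> (\<forall>x y. x < n div 6 \<longrightarrow> y < n div 6 \<longrightarrow> B x y = (x < y))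
         \<and> random_density 6 H \<le> density 6 H n B"
      proof -
        obtain B where B: "tournament n B" "\<forall>x y. x < n div 6 \<longrightarrow> y < n div 6 \<longrightarrow> B x y = (x < y)"
          "360 / 2 ^ 15 \<le> density 6 H n B" using bal_main[OF assms(1)] \<open>n \<ge> 105\<close> by blast
        have "random_density 6 H \<le> density 6 H n B" using rd2 B(3) by (rule order_trans)
        thus ?thesis using B(1,2) by blast
      qed
    qed
  qed
qed

end
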